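(* Let $m,n$ be positive integers with $m$ even ($n$ arbitrary). A matrix $A\in\Gamma^\pi_{m,n}$ is an extreme point of $\Gamma^\pi_{m,n}$ if and only if $A$ is a centrosymmetric rectangular permutation matrix.
   Context: A real $m\times n$ matrix is stochastic if its entries are nonnegative and each row sums to $1$. For $A=(a_{i,j})\in M_{m,n}$, $A^\pi$ is the matrix with $(A^\pi)_{i,j}=a_{m+1-i,n+1-j}$; $A$ is centrosymmetric if $A=A^\pi$. $\Gamma^\pi_{m,n}$ is the convex set of $m\times n$ centrosymmetric stochastic matrices. A rectangular permutation matrix is an $m\times n$ $(0,1)$-matrix with exactly one $1$ in each row. *)

theory Defs
  imports "HOL-Analysis.Analysis"
begin

text \<open>An m x n real matrix is represented as a function nat => nat => real with
  0-based indices; entries outside {0..<m} x {0..<n} are required to be zero,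
  so that the set of such matrices is a faithful copy of M_{m,n}(R).\<close>

definition is_mat :: "nat \<Rightarrow> nat \<Rightarrow> (nat \<Rightarrow> nat \<Rightarrow> real) \<Rightarrow> bool" where
  "is_mat m n A \<longleftrightarrow> (\<forall>i j. (i \<ge> m \<or> j \<ge> n) \<longrightarrow> A i j = 0)"

definition stochastic :: "nat \<Rightarrow> nat \<Rightarrow> (nat \<Rightarrow> nat \<Rightarrow> real) \<Rightarrow> bool" where
  "stochastic m n A \<longleftrightarrow> is_mat m n A \<and>
     (\<forall>i<m. \<forall>j<n. A i j \<ge> 0) \<and> (\<forall>i<m. (\<Sum>j<n. A i j) = 1)"

text \<open>A^pi with (A^pi)_{i,j} = a_{m+1-i,n+1-j}; in 0-based indexing this is
  A (m-1-i) (n-1-j).\<close>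
definition mat_pi :: "nat \<Rightarrow> nat \<Rightarrow> (nat \<Rightarrow> nat \<Rightarrow> real) \<Rightarrow> (nat \<Rightarrow> nat \<Rightarrow> real)" where
  "mat_pi m n A = (\<lambda>i j. if i < m \<and> j < n then A (m - 1 - i) (n - 1 - j) else 0)"

definition centrosymmetric :: "nat \<Rightarrow> nat \<Rightarrow> (nat \<Rightarrow> nat \<Rightarrow> real) \<Rightarrow> bool" where
  "centrosymmetric m n A \<longleftrightarrow> is_mat m n A \<and> A = mat_pi m n A"

definition Gamma_pi :: "nat \<Rightarrow> nat \<Rightarrow> (nat \<Rightarrow> nat \<Rightarrow> real) set" where
  "Gamma_pi m n = {A. centrosymmetric m n A \<and> stochastic m n A}"

definition rect_perm_mat :: "nat \<Rightarrow> nat \<Rightarrow> (nat \<Rightarrow> nat \<Rightarrow> real) \<Rightarrow> bool" where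
  "rect_perm_mat m n A \<longleftrightarrow> is_mat m n A \<and>
     (\<forall>i<m. \<forall>j<n. A i j = 0 \<or> A i j = 1) \<and>
     (\<forall>i<m. \<exists>!j. j < n \<and> A i j = 1)"

text \<open>Extreme point of a set of matrices (mirrors the library's extreme_point_of,
  which needs a real_vector type; functions are not an instance): A belongs to S
  and A lies in no open segment between two distinct members of S.\<close>
definition mat_extreme_point_of :: "(nat \<Rightarrow> nat \<Rightarrow> real) \<Rightarrow> (nat \<Rightarrow> nat \<Rightarrow> real) set \<Rightarrow> bool" where
  "mat_extreme_point_of A S \<longleftrightarrow> A \<in> S \<and>
     \<not> (\<exists>B\<in>S. \<exists>C\<in>S. B \<noteq> C \<and> (\<exists>t::real. 0 < t \<and> t < 1 \<and>
          A = (\<lambda>i j. t * B i j + (1 - t) * C i j)))"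

end

theory Submission
  imports Defs
begin

lemma entry_le_one:
  assumes "stochastic m n A" "i < m" "j < n"
  shows "A i j \<le> 1"
proof -
  have nn: "\<forall>j<n. A i j \<ge> 0" and s: "(\<Sum>j<n. A i j) = 1"
    using assms unfolding stochastic_def by auto
  have "A i j = (\<Sum>j\<in>{j}. A i j)" by simp
  also have "\<dots> \<le> (\<Sum>j<n. A i j)"
    by (rule sum_mono2) (use assms nn in auto)
  finally show ?thesis using s by simp
qed

lemma perm_is_extreme:
  assumes AG: "A \<in> Gamma_pi m n" and P: "rect_perm_mat m n A"
  shows "mat_extreme_point_of A (Gamma_pi m n)"
  unfolding mat_extreme_point_of_def
proof (intro conjI notI)
  show "A \<in> Gamma_pi m n" by fact
  assume "\<exists>B\<in>Gamma_pi m n. \<exists>C\<in>Gamma_pi m n. B \<noteq> C \<and> (\<exists>t::real. 0 < t \<and> t < 1 \<and>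
          A = (\<lambda>i j. t * B i j + (1 - t) * C i j))"
  then obtain B C t where B: "B \<in> Gamma_pi m n" and C: "C \<in> Gamma_pi m n" and BC: "B \<noteq> C"
    and t: "0 < t" "t < 1" and Aeq: "A = (\<lambda>i j. t * B i j + (1 - t) * C i j)" by blast
  have sB: "stochastic m n B" and sC: "stochastic m n C" using B C unfolding Gamma_pi_def by auto
  have "B i j = C i j" for i j
  proof (cases "i < m \<and> j < n")
    case True
    then have i: "i < m" and j: "j < n" by auto
    have Aij: "A i j = t * B i j + (1 - t) * C i j" using Aeq by meson
    have b0: "B i j \<ge> 0" "C i j \<ge> 0" using sB sC i j unfolding stochastic_def by auto
    have b1: "B i j \<le> 1" "C i j \<le> 1" using entry_le_one[OF sB i j] entry_le_one[OF sC i j] by auto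
    have "A i j = 0 \<or> A i j = 1" using P i j unfolding rect_perm_mat_def by auto
    then show ?thesis
    proof
      assume "A i j = 0"
      then have "t * B i j + (1 - t) * C i j = 0" using Aij by simp
      moreover have "t * B i j \<ge> 0" "(1 - t) * C i j \<ge> 0" using b0 t by auto
      ultimately have "t * B i j = 0" "(1 - t) * C i j = 0" by linarith+
      then show ?thesis using t by simp
    next
      assume "A i j = 1"
      then have e: "t * B i j + (1 - t) * C i j = 1" using Aij by simp
      have "t * B i j \<le> t" "(1 - t) * C i j \<le> 1 - t" using b1 t
        by (simp_all add: mult_left_le)
      then have "t * B i j = t" "(1 - t) * C i j = 1 - t" using e by linarith+
      then show ?thesis using t by simp
    qed
  next
    case False
    then show ?thesis using sB sC unfolding stochastic_def is_mat_def by auto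
  qed
  then show False using BC by blast
qed

lemma extreme_is_perm:
  assumes ev: "even m" and AG: "A \<in> Gamma_pi m n" and E: "mat_extreme_point_of A (Gamma_pi m n)"
  shows "rect_perm_mat m n A"
proof (rule ccontr)
  assume NP: "\<not> rect_perm_mat m n A"
  have sA: "stochastic m n A" and cA: "centrosymmetric m n A" using AG unfolding Gamma_pi_def by auto
  have imA: "is_mat m n A" and nn: "\<And>i j. i < m \<Longrightarrow> j < n \<Longrightarrow> A i j \<ge> 0"
    and rs: "\<And>i. i < m \<Longrightarrow> (\<Sum>j<n. A i j) = 1"
    using sA unfolding stochastic_def by auto
  have cs: "\<And>i j. i < m \<Longrightarrow> j < n \<Longrightarrow> A i j = A (m - 1 - i) (n - 1 - j)"
  proof -
    fix i j assume "i < m" "j < n"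
    have eqA: "A = mat_pi m n A" using cA unfolding centrosymmetric_def by simp
    have "A i j = mat_pi m n A i j" by (fact fun_cong[OF fun_cong[OF eqA]])
    then show "A i j = A (m - 1 - i) (n - 1 - j)" using \<open>i<m\<close> \<open>j<n\<close> unfolding mat_pi_def by simp
  qed
  have "\<exists>i0 j0. i0 < m \<and> j0 < n \<and> 0 < A i0 j0 \<and> A i0 j0 < 1"
  proof (rule ccontr)
    assume "\<not> ?thesis"
    then have z: "\<And>i j. i < m \<Longrightarrow> j < n \<Longrightarrow> A i j = 0 \<or> A i j = 1"
      using nn entry_le_one[OF sA] by (meson less_eq_real_def not_le)
    have "rect_perm_mat m n A"
      unfolding rect_perm_mat_def
    proof (intro conjI)
      show "is_mat m n A" by fact
      show "\<forall>i<m. \<forall>j<n. A i j = 0 \<or> A i j = 1" using z by auto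
      show "\<forall>i<m. \<exists>!j. j < n \<and> A i j = 1"
      proof (intro allI impI)
      fix i assume i: "i < m"
      have ex: "\<exists>j. j < n \<and> A i j = 1"
      proof (rule ccontr)
        assume "\<not> ?thesis"
        then have "(\<Sum>j<n. A i j) = 0" using z i by (intro sum.neutral) auto
        then show False using rs i by simp
      qed
      have un: "j = j'" if "j < n" "A i j = 1" "j' < n" "A i j' = 1" for j j'
      proof (rule ccontr)
        assume ne: "j \<noteq> j'"
        have "(\<Sum>k\<in>{j,j'}. A i k) \<le> (\<Sum>k<n. A i k)"
          by (rule sum_mono2) (use that nn i in auto)
        then show False using ne that rs i by simp
      qed
      show "\<exists>!j. j < n \<and> A i j = 1" using ex un by blast
    qed
    qed
    then show False using NP by simp
  qed
  then obtain i0 j0 where i0: "i0 < m" and j0: "j0 < n" and a0: "0 < A i0 j0" "A i0 j0 < 1" by blast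
  have "\<exists>j1. j1 < n \<and> j1 \<noteq> j0 \<and> 0 < A i0 j1"
  proof (rule ccontr)
    assume "\<not> ?thesis"
    then have z: "\<And>j. j < n \<Longrightarrow> j \<noteq> j0 \<Longrightarrow> A i0 j = 0" using nn i0 by (meson less_eq_real_def not_le)
    have "(\<Sum>j<n. A i0 j) = A i0 j0 + (\<Sum>j\<in>{..<n}-{j0}. A i0 j)"
      using j0 by (simp add: sum.remove)
    also have "(\<Sum>j\<in>{..<n}-{j0}. A i0 j) = 0" using z by (intro sum.neutral) auto
    finally show False using rs[OF i0] a0 by simp
  qed
  then obtain j1 where j1: "j1 < n" "j1 \<noteq> j0" "0 < A i0 j1" by blast
  define i1 where "i1 = m - 1 - i0"
  obtain b where b: "m = 2 * b" using ev by (elim evenE)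
  have i1a: "i1 < m" "m - 1 - i1 = i0" using i0 unfolding i1_def by auto
  have i1b: "i1 \<noteq> i0" using i0 b unfolding i1_def by presburger
  note i1 = i1a(1) i1b i1a(2)
  define eps where "eps = min (A i0 j0) (A i0 j1)"
  have eps: "eps > 0" "eps \<le> A i0 j0" "eps \<le> A i0 j1" using a0 j1 unfolding eps_def by auto
  define e :: "nat \<Rightarrow> nat \<Rightarrow> real" where "e a b = (if a = b then 1 else 0)" for a b
  define D where "D i j = (if i < m \<and> j < n then
      (if i = i0 then e j0 j - e j1 j else if i = i1 then e (n-1-j0) j - e (n-1-j1) j else 0) else 0)" for i j
  define B where "B i j = A i j + eps * D i j" for i j
  define C where "C i j = A i j - eps * D i j" for i j
  have Dsum: "(\<Sum>j<n. D i j) = 0" for i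
  proof -
    have "i = i0 \<and> i < m \<or> i = i1 \<and> i \<noteq> i0 \<and> i < m \<or> (i \<noteq> i0 \<and> i \<noteq> i1) \<or> \<not> i < m" by blast
    then show ?thesis
    proof (elim disjE conjE)
      assume "i = i0" "i < m"
      then show ?thesis unfolding D_def e_def using j0 j1 by (simp add: sum_subtractf sum.If_cases)
    next
      assume "i = i1" "i \<noteq> i0" "i < m"
      then show ?thesis unfolding D_def e_def using j0 j1 by (simp add: sum_subtractf sum.If_cases)
    next
      assume a: "i \<noteq> i0" "i \<noteq> i1"
      have "D i j = 0" for j unfolding D_def using a by simp
      then show ?thesis by simp
    next
      assume a: "\<not> i < m"
      have "D i j = 0" for j unfolding D_def using a by simp
      then show ?thesis by simp
    qed
  qed
  have Dpi: "D i j = D (m - 1 - i) (n - 1 - j)" if "i < m" "j < n" for i j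
  proof -
    have "m - 1 - i = i0 \<longleftrightarrow> i = i1" "m - 1 - i = i1 \<longleftrightarrow> i = i0"
      using that i0 unfolding i1_def by auto
    moreover have "\<And>a. a < n \<Longrightarrow> (n - 1 - a = n - 1 - j \<longleftrightarrow> a = j)" using that by auto
    moreover have "\<And>a. a < n \<Longrightarrow> (a = n - 1 - j \<longleftrightarrow> n - 1 - a = j)" using that by auto
    ultimately show ?thesis unfolding D_def e_def using that i1 j0 j1 by auto
  qed
  have Dbound: "eps * \<bar>D i j\<bar> \<le> A i j" if "i < m" "j < n" for i j
  proof -
    have "i = i0 \<or> i = i1 \<or> (i \<noteq> i0 \<and> i \<noteq> i1)" by blast
    then show ?thesis
    proof (elim disjE conjE)
      assume "i = i0" then show ?thesis unfolding D_def e_def using that eps j1 nn by auto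
    next
      assume ii: "i = i1"
      have "A i j = A i0 (n - 1 - j)" using cs[OF that] ii i1 by simp
      moreover have "n - 1 - j0 = j \<longleftrightarrow> n - 1 - j = j0" "n - 1 - j1 = j \<longleftrightarrow> n - 1 - j = j1"
        using that j0 j1 by auto
      ultimately show ?thesis unfolding D_def e_def using that eps j1 nn ii i1 i0 by auto
    next
      assume "i \<noteq> i0" "i \<noteq> i1" then show ?thesis unfolding D_def using that nn by auto
    qed
  qed
  have Dout: "D i j = 0" if "\<not> (i < m \<and> j < n)" for i j using that unfolding D_def by auto
  have inG: "(\<lambda>i j. A i j + s * eps * D i j) \<in> Gamma_pi m n" if s: "s = 1 \<or> s = -1" for s
    unfolding Gamma_pi_def centrosymmetric_def stochastic_def
  proof (intro CollectI conjI allI impI)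
    show im: "is_mat m n (\<lambda>i j. A i j + s * eps * D i j)"
      using imA Dout unfolding is_mat_def by auto
    show "(\<lambda>i j. A i j + s * eps * D i j) = mat_pi m n (\<lambda>i j. A i j + s * eps * D i j)"
    proof (intro ext)
      fix i j show "A i j + s * eps * D i j = mat_pi m n (\<lambda>i j. A i j + s * eps * D i j) i j"
      proof (cases "i < m \<and> j < n")
        case True
        then show ?thesis using cs[of i j] Dpi[of i j] unfolding mat_pi_def by simp
      next
        case False
        then show ?thesis using im unfolding mat_pi_def is_mat_def by auto
      qed
    qed
    show "is_mat m n (\<lambda>i j. A i j + s * eps * D i j)" by fact
    fix i assume i: "i < m"
    {
      fix j assume j: "j < n"
      have "\<bar>s * eps * D i j\<bar> = eps * \<bar>D i j\<bar>" using s eps by (auto simp: abs_mult)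
      then show "0 \<le> A i j + s * eps * D i j" using Dbound[OF i j] by linarith
    }
    show "(\<Sum>j<n. A i j + s * eps * D i j) = 1"
      using rs[OF i] Dsum[of i] by (simp add: sum.distrib sum_distrib_left[symmetric] mult.assoc)
  qed
  have ne: "(\<lambda>i j. A i j + 1 * eps * D i j) \<noteq> (\<lambda>i j. A i j + (-1) * eps * D i j)"
  proof
    assume "(\<lambda>i j. A i j + 1 * eps * D i j) = (\<lambda>i j. A i j + (-1) * eps * D i j)"
    then have "A i0 j0 + 1 * eps * D i0 j0 = A i0 j0 + (-1) * eps * D i0 j0" by metis
    moreover have "D i0 j0 = 1" unfolding D_def e_def using i0 j0 j1 by auto
    ultimately show False using eps by simp
  qed
  have "A = (\<lambda>i j. (1/2) * (A i j + 1 * eps * D i j) + (1 - 1/2) * (A i j + (-1) * eps * D i j))"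
    by (intro ext) (simp add: algebra_simps)
  moreover have "(0::real) < 1/2" "(1/2::real) < 1" by simp_all
  ultimately show False using E inG[of 1] inG[of "-1"] ne unfolding mat_extreme_point_of_def
    by blast
qed

theorem mainTheorem3:
  fixes m n :: nat and A :: "nat \<Rightarrow> nat \<Rightarrow> real"
  assumes "m > 0" and "n > 0" and "even m"
    and "A \<in> Gamma_pi m n"
  shows "mat_extreme_point_of A (Gamma_pi m n) \<longleftrightarrow>
           (centrosymmetric m n A \<and> rect_perm_mat m n A)"
  using assms perm_is_extreme extreme_is_perm unfolding Gamma_pi_def by blast

end
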